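(* Let $(U_n)_{n\ge1}$ be a sequence in $\mathcal{U}^{(2)}$ converging to $U\in\mathcal{U}^{(2)}$. Let $((X^n(i))_{i\ge1})_{n\ge1}$ be a sequence of random infinite vectors with values in $[0,1]$, and $(X^0(i))_{i\ge1}$ a random infinite vector in $[0,1]$, such that every finite-dimensional marginal law of each of these vectors has a density with respect to Lebesgue measure. If for every $k\ge1$, $X^n_k=(X^n(1),\dots,X^n(k))$ converges in law to $X^0_k=(X^0(1),\dots,X^0(k))$, then for every $k\ge1$, $$\sigma_{U_n}(X^n_k)\longrightarrow\sigma_U(X^0_k)\quad\text{in law}.$$
   Context: $\mathcal{U}^{(2)}$ is the set of pairs $(U_\uparrow,U_\downarrow)$ of disjoint open subsets of $]0,1[$ with metric $d((U_\uparrow,U_\downarrow),(V_\uparrow,V_\downarrow))=\max(d_{Haus}(U_\uparrow^c,V_\uparrow^c),d_{Haus}(U_\downarrow^c,V_\downarrow^c))$, complements in $[0,1]$. Paintbox: for $U\in\mathcal{U}^{(2)}$ and $x_1,\dots,x_k\in[0,1]$, $\sigma_U(x_1,\dots,x_k)\in\mathfrak{S}_k$ (a permutation written as a word) is defined by $\sigma^{-1}(i)<\sigma^{-1}(j)$ iff ($x_i,x_j$ not in a common connected component of $U_\uparrow$ or of $U_\downarrow$ and $x_i<x_j$) or ($x_i,x_j$ in the same component of $U_\uparrow$ and $i<j$) or ($x_i,x_j$ in the same component of $U_\downarrow$ and $j<i$). *)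

theory Defs
  imports "HOL-Analysis.Analysis" "HOL-Probability.Probability"
begin

definition hausdist :: "real set \<Rightarrow> real set \<Rightarrow> real" where
  "hausdist A B = max (SUP a\<in>A. infdist a B) (SUP b\<in>B. infdist b A)"

text \<open>The space U^(2): pairs (U_up, U_down) of disjoint open subsets of ]0,1[.\<close>
definition U2 :: "(real set \<times> real set) set" where
  "U2 = {(Uu, Ud). open Uu \<and> open Ud \<and> Uu \<subseteq> {0<..<1} \<and> Ud \<subseteq> {0<..<1} \<and> Uu \<inter> Ud = {}}"

definition dU2 :: "real set \<times> real set \<Rightarrow> real set \<times> real set \<Rightarrow> real" where
  "dU2 U V = max (hausdist ({0..1} - fst U) ({0..1} - fst V))
                 (hausdist ({0..1} - snd U) ({0..1} - snd V))"

text \<open>Ordering relation of the paintbox: index i is placed before index j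
  (i.e. sigma^{-1}(i) < sigma^{-1}(j)). Points are x 1, ..., x k.\<close>
definition pb_before :: "real set \<times> real set \<Rightarrow> (nat \<Rightarrow> real) \<Rightarrow> nat \<Rightarrow> nat \<Rightarrow> bool" where
  "pb_before U x i j \<longleftrightarrow>
     (\<not> connected_component (fst U) (x i) (x j) \<and> \<not> connected_component (snd U) (x i) (x j) \<and> x i < x j)
   \<or> (connected_component (fst U) (x i) (x j) \<and> i < j)
   \<or> (connected_component (snd U) (x i) (x j) \<and> j < i)"

text \<open>The paintbox permutation sigma_U(x 1, ..., x k) in S_k, written as a word
  (the list [sigma(1), ..., sigma(k)]); w ! p = sigma(p+1), so sigma^{-1}(i) < sigma^{-1}(j) iff i occurs before j.\<close>
definition paintbox :: "real set \<times> real set \<Rightarrow> nat \<Rightarrow> (nat \<Rightarrow> real) \<Rightarrow> nat list" where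
  "paintbox U k x = (THE w. distinct w \<and> set w = {1..k} \<and>
      (\<forall>p<k. \<forall>q<k. (p < q \<longleftrightarrow> pb_before U x (w ! p) (w ! q))))"

definition vec_emb :: "nat \<Rightarrow> (nat \<Rightarrow> real) \<Rightarrow> (nat \<Rightarrow> real)" where
  "vec_emb k x = (\<lambda>i. if i \<in> {1..k} then x i else 0)"

end

theory Submission
  imports Defs
begin

definition relk :: "real set \<times> real set \<Rightarrow> nat \<Rightarrow> (nat\<Rightarrow>real) \<Rightarrow> nat \<Rightarrow> nat \<Rightarrow> bool" where
  "relk V k x i j = (i \<in> {1..k} \<and> j \<in> {1..k} \<and> pb_before V x i j)"

definition pbR :: "nat \<Rightarrow> (nat\<Rightarrow>nat\<Rightarrow>bool) \<Rightarrow> nat list" where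
  "pbR k r = (THE w. distinct w \<and> set w = {1..k} \<and> (\<forall>p<k. \<forall>q<k. (p < q \<longleftrightarrow> r (w!p) (w!q))))"

lemma nth_in_range: assumes "distinct w" "set w = {1..k}" "p < k" shows "w ! p \<in> {1..k}"
proof -
  have "length w = k" using distinct_card[OF assms(1)] assms(2) by simp
  thus ?thesis using assms by (metis nth_mem)
qed

lemma paintbox_relk: "paintbox V k x = pbR k (relk V k x)"
proof -
  have "(\<lambda>w. distinct w \<and> set w = {1..k} \<and> (\<forall>p<k. \<forall>q<k. (p < q \<longleftrightarrow> pb_before V x (w!p) (w!q))))
      = (\<lambda>w. distinct w \<and> set w = {1..k} \<and> (\<forall>p<k. \<forall>q<k. (p < q \<longleftrightarrow> relk V k x (w!p) (w!q))))"
    using nth_in_range unfolding relk_def by (intro ext) blast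
  thus ?thesis unfolding paintbox_def pbR_def by simp
qed

lemma paintbox_cong:
  assumes "\<And>i j. i \<in> {1..k} \<Longrightarrow> j \<in> {1..k} \<Longrightarrow> pb_before V x i j = pb_before V' y i j"
  shows "paintbox V k x = paintbox V' k y"
proof -
  have "relk V k x = relk V' k y" using assms unfolding relk_def by (intro ext) blast
  thus ?thesis by (simp add: paintbox_relk)
qed

lemma paintbox_vec_emb: "paintbox V k (vec_emb k x) = paintbox V k x"
  by (rule paintbox_cong) (auto simp: pb_before_def vec_emb_def)

definition Rk :: "nat \<Rightarrow> (nat\<Rightarrow>nat\<Rightarrow>bool) set" where
  "Rk k = {r. \<forall>i j. r i j \<longrightarrow> i \<in> {1..k} \<and> j \<in> {1..k}}"

lemma finite_Rk: "finite (Rk k)"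
proof -
  have "Rk k \<subseteq> (\<lambda>S i j. (i,j) \<in> S) ` Pow ({1..k}\<times>{1..k})"
  proof
    fix r assume "r \<in> Rk k"
    hence "r = (\<lambda>i j. (i,j) \<in> {(i,j). r i j})" "{(i,j). r i j} \<in> Pow ({1..k}\<times>{1..k})"
      unfolding Rk_def by auto
    thus "r \<in> (\<lambda>S i j. (i,j) \<in> S) ` Pow ({1..k}\<times>{1..k})" by blast
  qed
  thus ?thesis by (rule finite_subset) simp
qed

lemma open_cc_rel:
  fixes Op :: "real set" assumes "open Op"
  shows "open {p. connected_component Op (fst p) (snd p)}"
proof (rule Topological_Spaces.openI)
  fix p assume "p \<in> {p. connected_component Op (fst p) (snd p)}"
  hence cc: "connected_component Op (fst p) (snd p)" by simp
  let ?C = "connected_component_set Op (fst p)"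
  have "open ?C" using open_connected_component[OF assms] .
  moreover have "fst p \<in> ?C" "snd p \<in> ?C" using cc
    by (auto simp: connected_component_in connected_component_refl_eq)
  ultimately have "open (?C \<times> ?C)" "p \<in> ?C \<times> ?C" by (auto intro: open_Times simp: mem_Times_iff)
  moreover have "?C \<times> ?C \<subseteq> {p. connected_component Op (fst p) (snd p)}"
  proof clarsimp
    fix a b assume "connected_component Op (fst p) a" "connected_component Op (fst p) b"
    thus "connected_component Op a b"
      by (meson connected_component_sym connected_component_trans)
  qed
  ultimately show "\<exists>T. open T \<and> p \<in> T \<and> T \<subseteq> {p. connected_component Op (fst p) (snd p)}" by blast
qed

lemma pred_cc:
  fixes Op :: "real set"
  assumes "open Op" "f \<in> borel_measurable M" "g \<in> borel_measurable M"
  shows "{\<omega> \<in> space M. connected_component Op (f \<omega>) (g \<omega>)} \<in> sets M"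
proof -
  have m: "(\<lambda>\<omega>. (f \<omega>, g \<omega>)) \<in> borel_measurable M" using borel_measurable_Pair[OF assms(2,3)] .
  have b: "{p. connected_component Op (fst p) (snd p)} \<in> sets borel"
    using open_cc_rel[OF assms(1)] by (rule borel_open)
  from measurable_sets[OF m b] have "(\<lambda>\<omega>. (f \<omega>, g \<omega>)) -` {p. connected_component Op (fst p) (snd p)} \<inter> space M \<in> sets M" .
  moreover have "(\<lambda>\<omega>. (f \<omega>, g \<omega>)) -` {p. connected_component Op (fst p) (snd p)} \<inter> space M = {\<omega> \<in> space M. connected_component Op (f \<omega>) (g \<omega>)}" by auto
  ultimately show ?thesis by metis
qed

lemma paintbox_event_meas:
  assumes V: "V \<in> U2" and X: "\<And>i. i \<in> {1..k} \<Longrightarrow> (\<lambda>\<omega>. X \<omega> i) \<in> borel_measurable M"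
  shows "{\<omega> \<in> space M. paintbox V k (X \<omega>) \<in> S} \<in> sets M"
proof -
  have o1: "open (fst V)" and o2: "open (snd V)" using V unfolding U2_def by auto
  have eq: "{\<omega> \<in> space M. paintbox V k (X \<omega>) \<in> S} =
     {\<omega> \<in> space M. \<exists>r\<in>Rk k \<inter> {r. pbR k r \<in> S}. \<forall>i\<in>{1..k}. \<forall>j\<in>{1..k}. pb_before V (X \<omega>) i j = r i j}"
  proof safe
    fix \<omega> assume "\<omega> \<in> space M" "paintbox V k (X \<omega>) \<in> S"
    thus "\<exists>r\<in>Rk k \<inter> {r. pbR k r \<in> S}. \<forall>i\<in>{1..k}. \<forall>j\<in>{1..k}. pb_before V (X \<omega>) i j = r i j"
      by (intro bexI[of _ "relk V k (X \<omega>)"]) (auto simp: relk_def Rk_def paintbox_relk)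
  next
    fix \<omega> r assume "r \<in> Rk k" "pbR k r \<in> S" "\<forall>i\<in>{1..k}. \<forall>j\<in>{1..k}. pb_before V (X \<omega>) i j = r i j"
    hence "relk V k (X \<omega>) = r" unfolding relk_def Rk_def by (intro ext) blast
    thus "paintbox V k (X \<omega>) \<in> S" using \<open>pbR k r \<in> S\<close> by (simp add: paintbox_relk)
  qed
  have pb: "{\<omega> \<in> space M. pb_before V (X \<omega>) i j = b} \<in> sets M" if "i \<in> {1..k}" "j \<in> {1..k}" for i j b
  proof -
    have m1: "(\<lambda>\<omega>. X \<omega> i) \<in> borel_measurable M" "(\<lambda>\<omega>. X \<omega> j) \<in> borel_measurable M"
      using X that by auto
    have A: "{\<omega> \<in> space M. X \<omega> i < X \<omega> j} \<in> sets M" by (rule borel_measurable_less[OF m1])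
    have B: "{\<omega> \<in> space M. connected_component (fst V) (X \<omega> i) (X \<omega> j)} \<in> sets M"
      by (rule pred_cc[OF o1 m1])
    have C: "{\<omega> \<in> space M. connected_component (snd V) (X \<omega> i) (X \<omega> j)} \<in> sets M"
      by (rule pred_cc[OF o2 m1])
    have D: "{\<omega> \<in> space M. pb_before V (X \<omega>) i j} \<in> sets M" unfolding pb_before_def
      by (intro sets.sets_Collect_disj sets.sets_Collect_conj sets.sets_Collect_neg A B C sets.sets_Collect_const)
    show ?thesis
    proof (cases b)
      case True thus ?thesis using D by simp
    next
      case False thus ?thesis using sets.sets_Collect_neg[OF D] by simp
    qed
  qed
  have "{\<omega> \<in> space M. \<exists>r\<in>Rk k \<inter> {r. pbR k r \<in> S}. \<forall>i\<in>{1..k}. \<forall>j\<in>{1..k}. pb_before V (X \<omega>) i j = r i j} \<in> sets M"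
    by (intro sets.sets_Collect_finite_Ex sets.sets_Collect_finite_All pb) (auto intro: finite_subset[OF _ finite_Rk])
  thus ?thesis unfolding eq .
qed


definition Eset :: "real set \<Rightarrow> real set" where
  "Eset Op = {t. t \<notin> Op \<and> (\<exists>e>0. {t<..<t+e} \<subseteq> Op \<or> {t-e<..<t} \<subseteq> Op)}"

lemma countable_Eset: "countable (Eset Op)"
proof -
  define L where "L = {t. t \<notin> Op \<and> (\<exists>e>0. {t<..<t+e} \<subseteq> Op)}"
  define R where "R = {t. t \<notin> Op \<and> (\<exists>e>0. {t-e<..<t} \<subseteq> Op)}"
  have "Eset Op = L \<union> R" unfolding Eset_def L_def R_def by blast
  moreover have "countable L"
  proof -
    define q where "q t = (SOME r. r \<in> \<rat> \<and> t < r \<and> (\<forall>s. s \<notin> Op \<and> t < s \<longrightarrow> r < s))" for t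
    have q: "q t \<in> \<rat> \<and> t < q t \<and> (\<forall>s. s \<notin> Op \<and> t < s \<longrightarrow> q t < s)" if tL: "t \<in> L" for t
    proof -
      obtain e where e: "e > 0" "{t<..<t+e} \<subseteq> Op" using tL unfolding L_def by blast
      obtain r where r: "r \<in> \<rat>" "t < r" "r < t + e" using Rats_dense_in_real[of t "t+e"] e by auto
      have "\<forall>s. s \<notin> Op \<and> t < s \<longrightarrow> r < s"
      proof (intro allI impI)
        fix s assume "s \<notin> Op \<and> t < s"
        hence "s \<ge> t + e" using e by (meson greaterThanLessThan_iff not_le subsetD)
        thus "r < s" using r by simp
      qed
      hence "\<exists>r. r \<in> \<rat> \<and> t < r \<and> (\<forall>s. s \<notin> Op \<and> t < s \<longrightarrow> r < s)" using r by blast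
      thus ?thesis unfolding q_def by (rule someI_ex)
    qed
    have "inj_on q L"
    proof (rule inj_onI)
      fix a b assume ab: "a \<in> L" "b \<in> L" "q a = q b"
      show "a = b"
      proof (rule ccontr)
        assume "a \<noteq> b"
        hence "a < b \<or> b < a" by auto
        thus False
        proof
          assume "a < b" hence "q a < b" using q[OF ab(1)] ab(2) unfolding L_def by blast
          thus False using q[OF ab(2)] ab(3) by simp
        next
          assume "b < a" hence "q b < a" using q[OF ab(2)] ab(1) unfolding L_def by blast
          thus False using q[OF ab(1)] ab(3) by simp
        qed
      qed
    qed
    moreover have "countable (q ` L)" using q by (intro countable_subset[OF _ countable_rat]) auto
    ultimately show ?thesis by (metis countable_image_inj_on)
  qed
  moreover have "countable R"
  proof -
    define q where "q t = (SOME r. r \<in> \<rat> \<and> r < t \<and> (\<forall>s. s \<notin> Op \<and> s < t \<longrightarrow> s < r))" for t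
    have q: "q t \<in> \<rat> \<and> q t < t \<and> (\<forall>s. s \<notin> Op \<and> s < t \<longrightarrow> s < q t)" if tR: "t \<in> R" for t
    proof -
      obtain e where e: "e > 0" "{t-e<..<t} \<subseteq> Op" using tR unfolding R_def by blast
      obtain r where r: "r \<in> \<rat>" "t - e < r" "r < t" using Rats_dense_in_real[of "t-e" t] e by auto
      have "\<forall>s. s \<notin> Op \<and> s < t \<longrightarrow> s < r"
      proof (intro allI impI)
        fix s assume "s \<notin> Op \<and> s < t"
        hence "s \<le> t - e" using e by (meson greaterThanLessThan_iff not_le subsetD)
        thus "s < r" using r by simp
      qed
      hence "\<exists>r. r \<in> \<rat> \<and> r < t \<and> (\<forall>s. s \<notin> Op \<and> s < t \<longrightarrow> s < r)" using r by blast
      thus ?thesis unfolding q_def by (rule someI_ex)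
    qed
    have "inj_on q R"
    proof (rule inj_onI)
      fix a b assume ab: "a \<in> R" "b \<in> R" "q a = q b"
      show "a = b"
      proof (rule ccontr)
        assume "a \<noteq> b"
        hence "a < b \<or> b < a" by auto
        thus False
        proof
          assume "a < b" hence "a < q b" using q[OF ab(2)] ab(1) unfolding R_def by blast
          thus False using q[OF ab(1)] ab(3) by simp
        next
          assume "b < a" hence "b < q a" using q[OF ab(1)] ab(2) unfolding R_def by blast
          thus False using q[OF ab(2)] ab(3) by simp
        qed
      qed
    qed
    moreover have "countable (q ` R)" using q by (intro countable_subset[OF _ countable_rat]) auto
    ultimately show ?thesis by (metis countable_image_inj_on)
  qed
  ultimately show ?thesis by simp
qed

lemma infdist_lessE:
  assumes "infdist x A < r" "A \<noteq> {}"
  obtains a where "a \<in> A" "dist x a < r"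
proof -
  have "(INF a\<in>A. dist x a) < r" using assms by (simp add: infdist_def)
  then obtain a where "a \<in> A" "dist x a < r"
    using cInf_lessD[of "(\<lambda>a. dist x a) ` A" r] assms(2) by auto
  thus ?thesis using that by blast
qed

lemma haus_le1:
  assumes "A \<subseteq> {0..1}" "B \<subseteq> {0..1}" "B \<noteq> {}" "a \<in> A"
  shows "infdist a B \<le> hausdist A B"
proof -
  obtain b where b: "b \<in> B" using assms by auto
  have "bdd_above ((\<lambda>a. infdist a B) ` A)"
  proof (rule bdd_aboveI2)
    fix x assume "x \<in> A"
    have "infdist x B \<le> dist x b" by (rule infdist_le[OF b])
    also have "\<dots> \<le> 1"
    proof -
      have "x \<in> {0..1}" "b \<in> {0..1}" using assms(1,2) b \<open>x \<in> A\<close> by auto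
      thus ?thesis by (auto simp: dist_real_def abs_le_iff)
    qed
    finally show "infdist x B \<le> 1" .
  qed
  hence "infdist a B \<le> (SUP a\<in>A. infdist a B)" using assms(4) by (rule cSUP_upper2) simp
  thus ?thesis unfolding hausdist_def by simp
qed

lemma haus_le2:
  assumes "A \<subseteq> {0..1}" "B \<subseteq> {0..1}" "A \<noteq> {}" "b \<in> B"
  shows "infdist b A \<le> hausdist A B"
proof -
  have "infdist b A \<le> hausdist B A" by (rule haus_le1[OF assms(2,1,3,4)])
  thus ?thesis unfolding hausdist_def by (simp add: max.commute)
qed

lemma haus_close1:
  assumes "A \<subseteq> {0..1}" "B \<subseteq> {0..1}" "B \<noteq> {}" "a \<in> A" "hausdist A B < r"
  obtains b where "b \<in> B" "\<bar>a - b\<bar> < r"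
proof -
  have "infdist a B < r" using haus_le1[OF assms(1-4)] assms(5) by simp
  from infdist_lessE[OF this assms(3)] show ?thesis using that by (auto simp: dist_real_def)
qed

lemma haus_close2:
  assumes "A \<subseteq> {0..1}" "B \<subseteq> {0..1}" "A \<noteq> {}" "b \<in> B" "hausdist A B < r"
  obtains a where "a \<in> A" "\<bar>b - a\<bar> < r"
proof -
  have "infdist b A < r" using haus_le2[OF assms(1-4)] assms(5) by simp
  from infdist_lessE[OF this assms(3)] show ?thesis using that by (auto simp: dist_real_def)
qed

lemma cc_interval:
  fixes Op :: "real set"
  assumes "connected_component Op a b" "a \<le> z" "z \<le> b"
  shows "z \<in> Op"
proof -
  obtain T where T: "connected T" "T \<subseteq> Op" "a \<in> T" "b \<in> T"
    using assms(1) unfolding connected_component_def by blast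
  hence "z \<in> T" using assms(2,3) connected_iff_interval by blast
  thus ?thesis using T by blast
qed

lemma cc_of_interval:
  fixes Op :: "real set"
  assumes "{c..d} \<subseteq> Op" "a \<in> {c..d}" "b \<in> {c..d}"
  shows "connected_component Op a b"
  unfolding connected_component_def using assms by (intro exI[of _ "{c..d}"]) auto

lemma cc_stable_true:
  fixes Op :: "real set"
  assumes Op: "open Op" "Op \<subseteq> {0<..<1}" and cc: "connected_component Op x1 x2"
  shows "\<exists>\<delta>>0. \<forall>Op' y1 y2. Op' \<subseteq> {0<..<1} \<longrightarrow> hausdist ({0..1} - Op) ({0..1} - Op') < \<delta> \<longrightarrow>
            \<bar>y1 - x1\<bar> < \<delta> \<longrightarrow> \<bar>y2 - x2\<bar> < \<delta> \<longrightarrow> connected_component Op' y1 y2"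
proof -
  define a where "a = min x1 x2"
  define b where "b = max x1 x2"
  have ab: "{a..b} \<subseteq> Op"
  proof
    fix z assume "z \<in> {a..b}"
    thus "z \<in> Op" using cc cc_interval[OF cc] cc_interval[OF connected_component_sym[OF cc]]
      unfolding a_def b_def by (cases "x1 \<le> x2") auto
  qed
  have "a \<in> Op" "b \<in> Op" using ab unfolding a_def b_def by auto
  then obtain e1 e2 where e1: "e1 > 0" "ball a e1 \<subseteq> Op" and e2: "e2 > 0" "ball b e2 \<subseteq> Op"
    using Op(1) open_contains_ball by metis
  define \<epsilon> where "\<epsilon> = min e1 e2 / 2"
  have eps: "\<epsilon> > 0" using e1 e2 unfolding \<epsilon>_def by simp
  have big: "{a-\<epsilon>..b+\<epsilon>} \<subseteq> Op"
  proof
    fix z assume z: "z \<in> {a-\<epsilon>..b+\<epsilon>}"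
    show "z \<in> Op"
    proof (cases "z < a")
      case True hence "z \<in> ball a e1" using z eps unfolding \<epsilon>_def by (auto simp: dist_real_def)
      thus ?thesis using e1 by blast
    next
      case False
      show ?thesis
      proof (cases "z > b")
        case True hence "z \<in> ball b e2" using z eps unfolding \<epsilon>_def by (auto simp: dist_real_def)
        thus ?thesis using e2 by blast
      next
        case False thus ?thesis using \<open>\<not> z < a\<close> ab by auto
      qed
    qed
  qed
  define \<delta> where "\<delta> = \<epsilon> / 2"
  have d: "\<delta> > 0" using eps unfolding \<delta>_def by simp
  show ?thesis
  proof (intro exI[of _ \<delta>] conjI d allI impI)
    fix Op' y1 y2
    assume Op': "Op' \<subseteq> {0<..<1}" and H: "hausdist ({0..1} - Op) ({0..1} - Op') < \<delta>"
      and y1: "\<bar>y1 - x1\<bar> < \<delta>" and y2: "\<bar>y2 - x2\<bar> < \<delta>"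
    have sub: "{a-\<delta>..b+\<delta>} \<subseteq> Op'"
    proof
      fix z assume z: "z \<in> {a-\<delta>..b+\<delta>}"
      show "z \<in> Op'"
      proof (rule ccontr)
        assume "z \<notin> Op'"
        moreover have "z \<in> Op" using z big d unfolding \<delta>_def by auto
        ultimately have "z \<in> {0..1} - Op'" using Op by auto
        moreover have "0 \<in> {0..1} - Op" using Op by auto
        ultimately obtain u where u: "u \<in> {0..1} - Op" "\<bar>z - u\<bar> < \<delta>"
          using haus_close2[of "{0..1} - Op" "{0..1} - Op'" z \<delta>] H by blast
        hence "z - u < \<delta>" "u - z < \<delta>" by (auto simp: abs_less_iff)
        hence "u \<in> {a-\<epsilon>..b+\<epsilon>}" using z unfolding \<delta>_def by auto
        thus False using u big by blast
      qed
    qed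
    have "y1 \<in> {a-\<delta>..b+\<delta>}" "y2 \<in> {a-\<delta>..b+\<delta>}" using y1 y2 unfolding a_def b_def by auto
    thus "connected_component Op' y1 y2" by (rule cc_of_interval[OF sub])
  qed
qed

lemma cc_stable_false:
  fixes Op :: "real set"
  assumes z: "z \<in> {0..1} - Op" "x1 < z" "z < x2"
  shows "\<exists>\<delta>>0. \<forall>Op' y1 y2. Op' \<subseteq> {0<..<1} \<longrightarrow> hausdist ({0..1} - Op) ({0..1} - Op') < \<delta> \<longrightarrow>
            \<bar>y1 - x1\<bar> < \<delta> \<longrightarrow> \<bar>y2 - x2\<bar> < \<delta> \<longrightarrow> \<not> connected_component Op' y1 y2 \<and> \<not> connected_component Op' y2 y1"
proof -
  define \<delta> where "\<delta> = min (z - x1) (x2 - z) / 2"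
  have d: "\<delta> > 0" using z unfolding \<delta>_def by simp
  show ?thesis
  proof (intro exI[of _ \<delta>] conjI d allI impI)
    fix Op' y1 y2
    assume Op': "Op' \<subseteq> {0<..<1}" and H: "hausdist ({0..1} - Op) ({0..1} - Op') < \<delta>"
      and y1: "\<bar>y1 - x1\<bar> < \<delta>" and y2: "\<bar>y2 - x2\<bar> < \<delta>"
    have "0 \<in> {0..1} - Op'" using Op' by auto
    then obtain u where u: "u \<in> {0..1} - Op'" "\<bar>z - u\<bar> < \<delta>"
      using haus_close1[of "{0..1} - Op" "{0..1} - Op'" z \<delta>] H z(1) by blast
    have "\<delta> \<le> (z - x1)/2" "\<delta> \<le> (x2 - z)/2" unfolding \<delta>_def by auto
    hence "y1 \<le> u" "u \<le> y2" using u y1 y2 by (auto simp: abs_less_iff)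
    thus "\<not> connected_component Op' y1 y2" using cc_interval[of Op' y1 y2 u] u by blast
    thus "\<not> connected_component Op' y2 y1" using connected_component_sym by blast
  qed
qed

lemma generic_sep:
  fixes Op :: "real set"
  assumes "x1 < x2" "x1 \<in> {0..1}" "x2 \<in> {0..1}" "\<not> connected_component Op x1 x2"
    "x1 \<notin> Eset Op" "x2 \<notin> Eset Op"
  shows "\<exists>z. z \<in> {0..1} - Op \<and> x1 < z \<and> z < x2"
proof (rule ccontr)
  assume "\<not> ?thesis"
  hence sub: "{x1<..<x2} \<subseteq> Op" using assms(2,3) by force
  show False
  proof (cases "x1 \<in> Op")
    case False
    hence "x1 \<in> Eset Op" unfolding Eset_def using sub assms(1)
      by (intro CollectI conjI exI[of _ "x2 - x1"]) auto
    thus False using assms by blast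
  next
    case True
    show False
    proof (cases "x2 \<in> Op")
      case False
      hence "x2 \<in> Eset Op" unfolding Eset_def using sub assms(1)
        by (intro CollectI conjI exI[of _ "x2 - x1"]) auto
      thus False using assms by blast
    next
      case True
      have "{x1..x2} \<subseteq> Op" using sub \<open>x1 \<in> Op\<close> True by (auto simp: less_eq_real_def)
      hence "connected_component Op x1 x2" using assms(1) by (intro cc_of_interval) auto
      thus False using assms by blast
    qed
  qed
qed


lemma hausdist_sym: "hausdist A B = hausdist B A"
  unfolding hausdist_def by (simp add: max.commute)

lemma cc_atom_stable:
  fixes Op :: "real set"
  assumes Op: "open Op" "Op \<subseteq> {0<..<1}" and x: "x1 \<in> {0..1}" "x2 \<in> {0..1}" "x1 \<noteq> x2"
    "x1 \<notin> Eset Op" "x2 \<notin> Eset Op"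
  shows "\<exists>\<delta>>0. \<forall>Op' y1 y2. Op' \<subseteq> {0<..<1} \<longrightarrow> hausdist ({0..1} - Op) ({0..1} - Op') < \<delta> \<longrightarrow>
            \<bar>y1 - x1\<bar> < \<delta> \<longrightarrow> \<bar>y2 - x2\<bar> < \<delta> \<longrightarrow> (connected_component Op' y1 y2 \<longleftrightarrow> connected_component Op x1 x2)"
proof (cases "connected_component Op x1 x2")
  case True
  from cc_stable_true[OF Op True] show ?thesis using True by simp
next
  case False
  show ?thesis
  proof (cases "x1 < x2")
    case True
    then obtain z where z: "z \<in> {0..1} - Op" "x1 < z" "z < x2" using generic_sep[OF True x(1,2) False x(4,5)] by blast
    from cc_stable_false[OF z] show ?thesis using False by blast
  next
    case nl: False
    hence lt: "x2 < x1" using x(3) by simp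
    have F2: "\<not> connected_component Op x2 x1" using False connected_component_sym by blast
    obtain z where z: "z \<in> {0..1} - Op" "x2 < z" "z < x1" using generic_sep[OF lt x(2,1) F2 x(5,4)] by blast
    from cc_stable_false[OF z] obtain \<delta> where d: "\<delta> > 0" and
      H: "\<forall>Op' y1 y2. Op' \<subseteq> {0<..<1} \<longrightarrow> hausdist ({0..1} - Op) ({0..1} - Op') < \<delta> \<longrightarrow>
            \<bar>y1 - x2\<bar> < \<delta> \<longrightarrow> \<bar>y2 - x1\<bar> < \<delta> \<longrightarrow> \<not> connected_component Op' y1 y2 \<and> \<not> connected_component Op' y2 y1"
      by blast
    show ?thesis using False d H by (intro exI[of _ \<delta>]) blast
  qed
qed

definition Gen :: "real set \<times> real set \<Rightarrow> nat \<Rightarrow> (nat \<Rightarrow> real) set" where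
  "Gen U k = {x. (\<forall>i\<in>{1..k}. x i \<in> {0..1} \<and> x i \<notin> Eset (fst U) \<and> x i \<notin> Eset (snd U)) \<and>
                 (\<forall>i\<in>{1..k}. \<forall>j\<in>{1..k}. i \<noteq> j \<longrightarrow> x i \<noteq> x j)}"

definition dk :: "nat \<Rightarrow> (nat \<Rightarrow> real) \<Rightarrow> (nat \<Rightarrow> real) \<Rightarrow> real" where
  "dk k x y = (\<Sum>i\<in>{1..k}. \<bar>x i - y i\<bar>)"

lemma dk_coord: "l \<in> {1..k} \<Longrightarrow> \<bar>x l - y l\<bar> \<le> dk k x y"
  unfolding dk_def by (rule member_le_sum) auto

lemma dU2_ge1: "hausdist ({0..1} - fst U) ({0..1} - fst V) \<le> dU2 V U"
  unfolding dU2_def by (simp add: hausdist_sym)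
lemma dU2_ge2: "hausdist ({0..1} - snd U) ({0..1} - snd V) \<le> dU2 V U"
  unfolding dU2_def by (simp add: hausdist_sym)

lemma pb_pair_stable:
  assumes U: "U \<in> U2" and x: "x \<in> Gen U k" and ij: "i \<in> {1..k}" "j \<in> {1..k}"
  shows "\<exists>\<delta>>0. \<forall>V y. V \<in> U2 \<longrightarrow> dU2 V U < \<delta> \<longrightarrow> (\<forall>l\<in>{1..k}. \<bar>y l - x l\<bar> < \<delta>) \<longrightarrow>
            pb_before V y i j = pb_before U x i j"
proof (cases "i = j")
  case True
  thus ?thesis by (intro exI[of _ 1]) (auto simp: pb_before_def)
next
  case False
  have xi: "x i \<in> {0..1}" "x i \<notin> Eset (fst U)" "x i \<notin> Eset (snd U)"
   and xj: "x j \<in> {0..1}" "x j \<notin> Eset (fst U)" "x j \<notin> Eset (snd U)"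
   and ne: "x i \<noteq> x j" using x ij False unfolding Gen_def by auto
  have U1: "open (fst U)" "fst U \<subseteq> {0<..<1}" and U2': "open (snd U)" "snd U \<subseteq> {0<..<1}"
    using U unfolding U2_def by auto
  obtain d1 where d1: "d1 > 0" "\<forall>Op' y1 y2. Op' \<subseteq> {0<..<1} \<longrightarrow> hausdist ({0..1} - fst U) ({0..1} - Op') < d1 \<longrightarrow>
            \<bar>y1 - x i\<bar> < d1 \<longrightarrow> \<bar>y2 - x j\<bar> < d1 \<longrightarrow> (connected_component Op' y1 y2 \<longleftrightarrow> connected_component (fst U) (x i) (x j))"
    using cc_atom_stable[OF U1 xi(1) xj(1) ne xi(2) xj(2)] by blast
  obtain d2 where d2: "d2 > 0" "\<forall>Op' y1 y2. Op' \<subseteq> {0<..<1} \<longrightarrow> hausdist ({0..1} - snd U) ({0..1} - Op') < d2 \<longrightarrow>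
            \<bar>y1 - x i\<bar> < d2 \<longrightarrow> \<bar>y2 - x j\<bar> < d2 \<longrightarrow> (connected_component Op' y1 y2 \<longleftrightarrow> connected_component (snd U) (x i) (x j))"
    using cc_atom_stable[OF U2' xi(1) xj(1) ne xi(3) xj(3)] by blast
  define d3 where "d3 = \<bar>x i - x j\<bar> / 2"
  have d3: "d3 > 0" using ne unfolding d3_def by simp
  define \<delta> where "\<delta> = min d1 (min d2 d3)"
  have d: "\<delta> > 0" using d1 d2 d3 unfolding \<delta>_def by simp
  show ?thesis
  proof (intro exI[of _ \<delta>] conjI d allI impI)
    fix V y assume V: "V \<in> U2" and dV: "dU2 V U < \<delta>" and y: "\<forall>l\<in>{1..k}. \<bar>y l - x l\<bar> < \<delta>"
    have V1: "fst V \<subseteq> {0<..<1}" "snd V \<subseteq> {0<..<1}" using V unfolding U2_def by auto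
    have yi: "\<bar>y i - x i\<bar> < \<delta>" and yj: "\<bar>y j - x j\<bar> < \<delta>" using y ij by auto
    have c1: "connected_component (fst V) (y i) (y j) \<longleftrightarrow> connected_component (fst U) (x i) (x j)"
      using d1(2) V1(1) dU2_ge1[of U V] dV yi yj unfolding \<delta>_def by auto
    have c2: "connected_component (snd V) (y i) (y j) \<longleftrightarrow> connected_component (snd U) (x i) (x j)"
      using d2(2) V1(2) dU2_ge2[of U V] dV yi yj unfolding \<delta>_def by auto
    have c3: "y i < y j \<longleftrightarrow> x i < x j"
    proof -
      have "\<bar>y i - x i\<bar> < d3" "\<bar>y j - x j\<bar> < d3" using yi yj unfolding \<delta>_def by auto
      thus ?thesis unfolding d3_def by (auto simp: abs_less_iff abs_if split: if_splits)
    qed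
    show "pb_before V y i j = pb_before U x i j" unfolding pb_before_def using c1 c2 c3 by simp
  qed
qed

lemma robust:
  assumes U: "U \<in> U2" and Us: "\<And>n. Us n \<in> U2" and conv: "(\<lambda>n. dU2 (Us n) U) \<longlonglongrightarrow> 0"
    and x: "x \<in> Gen U k"
  shows "\<exists>\<epsilon>>0. \<exists>N. \<forall>n\<ge>N. \<forall>y. dk k x y < \<epsilon> \<longrightarrow> paintbox (Us n) k y = paintbox U k x"
proof -
  have "\<forall>p\<in>{1..k}\<times>{1..k}. \<exists>\<delta>>0. \<forall>V y. V \<in> U2 \<longrightarrow> dU2 V U < \<delta> \<longrightarrow> (\<forall>l\<in>{1..k}. \<bar>y l - x l\<bar> < \<delta>) \<longrightarrow>
            pb_before V y (fst p) (snd p) = pb_before U x (fst p) (snd p)"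
    using pb_pair_stable[OF U x] by auto
  then obtain D where D: "\<And>p. p \<in> {1..k}\<times>{1..k} \<Longrightarrow> D p > 0 \<and> (\<forall>V y. V \<in> U2 \<longrightarrow> dU2 V U < D p \<longrightarrow> (\<forall>l\<in>{1..k}. \<bar>y l - x l\<bar> < D p) \<longrightarrow>
            pb_before V y (fst p) (snd p) = pb_before U x (fst p) (snd p))"
    by metis
  define \<delta> where "\<delta> = Min (insert 1 (D ` ({1..k}\<times>{1..k})))"
  have fin: "finite (insert 1 (D ` ({1..k}\<times>{1..k})))" by simp
  have d: "\<delta> > 0" unfolding \<delta>_def using D fin by (subst Min_gr_iff) auto
  have dle: "\<delta> \<le> D p" if "p \<in> {1..k}\<times>{1..k}" for p
    unfolding \<delta>_def using fin that by (intro Min_le) auto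
  have "eventually (\<lambda>n. dist (dU2 (Us n) U) 0 < \<delta>) sequentially"
    using conv d by (rule tendstoD)
  then obtain N where N: "\<And>n. n \<ge> N \<Longrightarrow> dist (dU2 (Us n) U) 0 < \<delta>" unfolding eventually_sequentially by blast
  show ?thesis
  proof (intro exI[of _ \<delta>] conjI d exI[of _ N] allI impI)
    fix n y assume n: "N \<le> n" and y: "dk k x y < \<delta>"
    have dn: "dU2 (Us n) U < \<delta>" using N[OF n] by (simp add: dist_real_def)
    show "paintbox (Us n) k y = paintbox U k x"
    proof (rule paintbox_cong)
      fix i j assume ij: "i \<in> {1..k}" "j \<in> {1..k}"
      hence p: "(i,j) \<in> {1..k}\<times>{1..k}" by simp
      have "\<forall>l\<in>{1..k}. \<bar>y l - x l\<bar> < D (i,j)"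
      proof
        fix l assume "l \<in> {1..k}"
        hence "\<bar>x l - y l\<bar> \<le> dk k x y" by (rule dk_coord)
        thus "\<bar>y l - x l\<bar> < D (i,j)" using y dle[OF p] by (simp add: abs_minus_commute)
      qed
      moreover have "dU2 (Us n) U < D (i,j)" using dn dle[OF p] by simp
      ultimately show "pb_before (Us n) y i j = pb_before U x i j"
        using conjunct2[OF D[OF p], rule_format, of "Us n" y] Us[of n] by simp
    qed
  qed
qed


lemma dk_self[simp]: "dk k x x = 0" unfolding dk_def by simp
lemma dk_nonneg: "0 \<le> dk k x y" unfolding dk_def by (simp add: sum_nonneg)
lemma dk_sym: "dk k x y = dk k y x" unfolding dk_def by (simp add: abs_minus_commute)
lemma dk_tri: "dk k x z \<le> dk k x y + dk k y z"
  unfolding dk_def sum.distrib[symmetric] by (intro sum_mono) (simp add: abs_triangle_ineq4[of "x _ - y _" "z _ - y _", simplified] abs_diff_triangle_ineq)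

lemma dk_cont: "continuous_on UNIV (\<lambda>y. dk k a y)"
  unfolding dk_def by (intro continuous_on_sum continuous_on_rabs continuous_on_diff continuous_on_const continuous_on_product_coordinates)

lemma lip_cont:
  fixes F :: "(nat \<Rightarrow> real) \<Rightarrow> real"
  assumes "\<And>y y'. \<bar>F y - F y'\<bar> \<le> dk k y y'"
  shows "continuous_on UNIV F"
  unfolding continuous_on_eq_continuous_at[OF open_UNIV] isCont_def
proof (intro ballI tendstoI)
  fix x :: "nat \<Rightarrow> real" and e :: real assume e: "0 < e"
  show "\<forall>\<^sub>F y in at x. dist (F y) (F x) < e"
    unfolding eventually_at_topological
  proof (intro exI[of _ "{y. dk k x y < e}"] conjI ballI impI)
    show "open {y. dk k x y < e}" by (rule open_Collect_less[OF dk_cont continuous_on_const])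
    show "x \<in> {y. dk k x y < e}" using e by simp
    fix y assume "y \<in> {y. dk k x y < e}"
    thus "dist (F y) (F x) < e" using assms[of y x] by (simp add: dist_real_def dk_sym)
  qed
qed


lemma key:
  fixes M :: "nat \<Rightarrow> 'a measure" and Y :: "nat \<Rightarrow> 'a \<Rightarrow> nat \<Rightarrow> real"
    and M0 :: "'b measure" and Y0 :: "'b \<Rightarrow> nat \<Rightarrow> real"
  assumes prob: "\<And>n. prob_space (M n)" and prob0: "prob_space M0"
    and Ym: "\<And>n. Y n \<in> borel_measurable (M n)" and Y0m: "Y0 \<in> borel_measurable M0"
    and conv: "\<And>g :: (nat \<Rightarrow> real) \<Rightarrow> real. continuous_on UNIV g \<Longrightarrow> bounded (range g) \<Longrightarrow>
         (\<lambda>n. integral\<^sup>L (M n) (\<lambda>\<omega>. g (Y n \<omega>))) \<longlonglongrightarrow> integral\<^sup>L M0 (\<lambda>\<omega>. g (Y0 \<omega>))"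
    and Bm: "\<And>n. {\<omega> \<in> space (M n). Y n \<omega> \<in> B n} \<in> sets (M n)"
    and AE: "AE \<omega> in M0. Y0 \<omega> \<in> G"
    and rob: "\<And>x. x \<in> A \<Longrightarrow> x \<in> G \<Longrightarrow> \<exists>\<epsilon>>0. \<exists>N. \<forall>n\<ge>N. \<forall>y. dk k x y < \<epsilon> \<longrightarrow> y \<in> B n"
    and e: "e > 0"
  shows "eventually (\<lambda>n. measure (M n) {\<omega> \<in> space (M n). Y n \<omega> \<in> B n} > measure M0 {\<omega> \<in> space M0. Y0 \<omega> \<in> A} - e) sequentially"
proof -
  interpret P0: prob_space M0 by (rule prob0)
  define Aj where "Aj j = {x \<in> A \<inter> G. \<forall>n\<ge>j. \<forall>y. dk k x y < 1 / (real j + 1) \<longrightarrow> y \<in> B n}" for j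
  define D where "D j y = Inf ((\<lambda>a. dk k a y) ` Aj j)" for j y
  define g where "g j y = (if Aj j = {} then 0 else max 0 (1 - 2 * (real j + 1) * D j y))" for j y
  define F where "F j = (if Aj j = {} then {} else {\<omega> \<in> space M0. D j (Y0 \<omega>) = 0})" for j

  have bdd: "bdd_below ((\<lambda>a. dk k a y) ` Aj j)" for j y
    by (rule bdd_belowI2[of _ 0]) (simp add: dk_nonneg)
  have D_nonneg: "0 \<le> D j y" if "Aj j \<noteq> {}" for j y
    unfolding D_def using that by (intro cInf_greatest) (auto simp: dk_nonneg)
  have D_le: "D j y \<le> dk k a y" if "a \<in> Aj j" for j y a
    unfolding D_def using that bdd by (intro cInf_lower) auto
  have D_zero: "D j a = 0" if "a \<in> Aj j" for j a
    using D_le[OF that, of a] D_nonneg[of j a] that by force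
  have D_lip: "\<bar>D j y - D j y'\<bar> \<le> dk k y y'" if "Aj j \<noteq> {}" for j y y'
  proof -
    have *: "D j y \<le> D j y' + dk k y y'" for y y'
    proof -
      have "D j y - dk k y y' \<le> D j y'"
        unfolding D_def[of j y']
      proof (rule cInf_greatest)
        show "(\<lambda>a. dk k a y') ` Aj j \<noteq> {}" using that by simp
        fix t assume "t \<in> (\<lambda>a. dk k a y') ` Aj j"
        then obtain a where a: "a \<in> Aj j" "t = dk k a y'" by blast
        have "D j y \<le> dk k a y" by (rule D_le[OF a(1)])
        also have "\<dots> \<le> dk k a y' + dk k y' y" by (rule dk_tri)
        finally show "D j y - dk k y y' \<le> t" using a by (simp add: dk_sym)
      qed
      thus ?thesis by simp
    qed
    show ?thesis using *[of y y'] *[of y' y] by (simp add: dk_sym abs_le_iff)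
  qed
  have g_cont: "continuous_on UNIV (g j)" for j
  proof (cases "Aj j = {}")
    case True thus ?thesis unfolding g_def by simp
  next
    case False
    have "continuous_on UNIV (D j)" by (rule lip_cont[of _ k]) (rule D_lip[OF False])
    hence "continuous_on UNIV (\<lambda>y. max 0 (1 - 2 * (real j + 1) * D j y))"
      by (intro continuous_intros)
    thus ?thesis unfolding g_def using False by simp
  qed
  have g_range: "0 \<le> g j y \<and> g j y \<le> 1" for j y
    unfolding g_def using D_nonneg[of j y] by (auto simp: mult_nonneg_nonneg)
  have g_bdd: "bounded (range (g j))" for j
    unfolding bounded_iff using g_range by (intro exI[of _ 1]) auto
  have g_meas: "(\<lambda>\<omega>. g j (Y0 \<omega>)) \<in> borel_measurable M0" for j
    using measurable_comp[OF Y0m borel_measurable_continuous_onI[OF g_cont]] by (simp add: comp_def)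
  have gn_meas: "(\<lambda>\<omega>. g j (Y n \<omega>)) \<in> borel_measurable (M n)" for j n
    using measurable_comp[OF Ym borel_measurable_continuous_onI[OF g_cont]] by (simp add: comp_def)
  have g_pos: "y \<in> B n" if gp: "g j y > 0" "n \<ge> j" for j y n
  proof -
    have ne: "Aj j \<noteq> {}" using gp unfolding g_def by (auto split: if_splits)
    hence "2 * (real j + 1) * D j y < 1" using gp unfolding g_def by simp
    hence "D j y < 1 / (real j + 1)" by (simp add: field_simps)
    then obtain t where t: "t \<in> (\<lambda>a. dk k a y) ` Aj j" "t < 1 / (real j + 1)"
      unfolding D_def using ne by (subst (asm) cInf_less_iff) (auto simp: bdd)
    then obtain a where "a \<in> Aj j" "dk k a y < 1 / (real j + 1)" by blast
    thus ?thesis using gp(2) unfolding Aj_def by blast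
  qed
  have Aj_mono: "Aj j \<subseteq> Aj j'" if "j \<le> j'" for j j'
  proof
    fix x assume x: "x \<in> Aj j"
    have "1 / (real j' + 1) \<le> 1 / (real j + 1)" using that by (simp add: frac_le)
    thus "x \<in> Aj j'" using x that unfolding Aj_def by force
  qed
  have F_sets: "F j \<in> sets M0" for j
  proof (cases "Aj j = {}")
    case True thus ?thesis unfolding F_def by simp
  next
    case False
    have "continuous_on UNIV (D j)" by (rule lip_cont[of _ k]) (rule D_lip[OF False])
    hence "(\<lambda>\<omega>. D j (Y0 \<omega>)) \<in> borel_measurable M0"
      using measurable_comp[OF Y0m borel_measurable_continuous_onI] by (simp add: comp_def)
    hence "{\<omega> \<in> space M0. D j (Y0 \<omega>) = 0} \<in> sets M0" by measurable
    thus ?thesis unfolding F_def using False by simp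
  qed
  have F_inc: "incseq F"
  proof (rule incseq_SucI)
    fix j show "F j \<subseteq> F (Suc j)"
    proof
      fix \<omega> assume \<omega>: "\<omega> \<in> F j"
      hence ne: "Aj j \<noteq> {}" and "D j (Y0 \<omega>) = 0" "\<omega> \<in> space M0" unfolding F_def by (auto split: if_splits)
      have sub: "Aj j \<subseteq> Aj (Suc j)" by (rule Aj_mono) simp
      hence ne': "Aj (Suc j) \<noteq> {}" using ne by blast
      have "D (Suc j) (Y0 \<omega>) \<le> D j (Y0 \<omega>)"
        unfolding D_def using ne sub bdd by (intro cInf_superset_mono) auto
      hence "D (Suc j) (Y0 \<omega>) = 0" using D_nonneg[OF ne'] \<open>D j (Y0 \<omega>) = 0\<close> by (metis order_antisym)
      thus "\<omega> \<in> F (Suc j)" unfolding F_def using ne' \<open>\<omega> \<in> space M0\<close> by simp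
    qed
  qed
  have cover: "\<omega> \<in> (\<Union>j. F j)" if cv: "\<omega> \<in> space M0" "Y0 \<omega> \<in> A" "Y0 \<omega> \<in> G" for \<omega>
  proof -
    obtain \<epsilon> N where eps: "\<epsilon> > 0" and N: "\<forall>n\<ge>N. \<forall>y. dk k (Y0 \<omega>) y < \<epsilon> \<longrightarrow> y \<in> B n"
      using rob[OF cv(2,3)] by blast
    obtain m :: nat where m: "1 / \<epsilon> < real m" using reals_Archimedean2 by blast
    define j where "j = max N m"
    have "1 / (real j + 1) \<le> \<epsilon>"
    proof -
      have "1 / \<epsilon> < real j + 1" using m unfolding j_def by linarith
      hence "1 < \<epsilon> * (real j + 1)" using eps by (simp add: field_simps)
      thus ?thesis using eps by (simp add: field_simps)
    qed
    hence "Y0 \<omega> \<in> Aj j" using N cv unfolding Aj_def j_def by force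
    hence "\<omega> \<in> F j" using D_zero cv(1) unfolding F_def by auto
    thus ?thesis by blast
  qed
  have UF: "(\<Union>j. F j) \<in> sets M0" using F_sets by blast
  have mA: "measure M0 {\<omega> \<in> space M0. Y0 \<omega> \<in> A} \<le> measure M0 (\<Union>j. F j)"
  proof (rule P0.finite_measure_mono_AE[OF _ UF])
    show "AE x in M0. x \<in> {\<omega> \<in> space M0. Y0 \<omega> \<in> A} \<longrightarrow> x \<in> \<Union> (range F)"
      using AE
    proof eventually_elim
      case (elim x) thus ?case using cover[of x] by blast
    qed
  qed
  have "(\<lambda>j. measure M0 (F j)) \<longlonglongrightarrow> measure M0 (\<Union>j. F j)"
    by (rule Lim_measure_incseq) (use F_sets F_inc in auto)
  hence "eventually (\<lambda>j. dist (measure M0 (F j)) (measure M0 (\<Union>j. F j)) < e/2) sequentially"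
    using e by (intro tendstoD) auto
  then obtain N where N: "\<forall>n\<ge>N. dist (measure M0 (F n)) (measure M0 (\<Union>j. F j)) < e/2"
    by (auto simp: eventually_sequentially)
  define j where "j = N"
  have j: "measure M0 (F j) > measure M0 (\<Union>j. F j) - e/2"
  proof -
    have "dist (measure M0 (F N)) (measure M0 (\<Union>j. F j)) < e/2" using N by simp
    thus ?thesis unfolding j_def dist_real_def by linarith
  qed
  have int0: "integral\<^sup>L M0 (\<lambda>\<omega>. g j (Y0 \<omega>)) \<ge> measure M0 (F j)"
  proof -
    have "measure M0 (F j) = integral\<^sup>L M0 (indicator (F j))" using F_sets[of j] by (simp add: Int_absorb2 sets.sets_into_space)
    also have "\<dots> \<le> integral\<^sup>L M0 (\<lambda>\<omega>. g j (Y0 \<omega>))"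
    proof (rule integral_mono)
      show "integrable M0 (indicator (F j) :: 'b \<Rightarrow> real)" using F_sets[of j] by (intro integrable_real_indicator) (auto simp: P0.emeasure_eq_measure)
      show "integrable M0 (\<lambda>\<omega>. g j (Y0 \<omega>))"
        by (rule P0.integrable_const_bound[of _ 1]) (use g_range g_meas in auto)
      fix \<omega> assume "\<omega> \<in> space M0"
      show "indicator (F j) \<omega> \<le> g j (Y0 \<omega>)"
      proof (cases "\<omega> \<in> F j")
        case True
        hence "Aj j \<noteq> {}" "D j (Y0 \<omega>) = 0" unfolding F_def by (auto split: if_splits)
        thus ?thesis using True unfolding g_def by simp
      qed (use g_range in simp)
    qed
    finally show ?thesis .
  qed
  have "(\<lambda>n. integral\<^sup>L (M n) (\<lambda>\<omega>. g j (Y n \<omega>))) \<longlonglongrightarrow> integral\<^sup>L M0 (\<lambda>\<omega>. g j (Y0 \<omega>))"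
    by (rule conv[OF g_cont g_bdd])
  hence "eventually (\<lambda>n. dist (integral\<^sup>L (M n) (\<lambda>\<omega>. g j (Y n \<omega>))) (integral\<^sup>L M0 (\<lambda>\<omega>. g j (Y0 \<omega>))) < e/2) sequentially"
    using e by (intro tendstoD) auto
  moreover have "eventually (\<lambda>n. n \<ge> j) sequentially" by (rule eventually_ge_at_top)
  ultimately show ?thesis
  proof eventually_elim
    case (elim n)
    interpret Pn: prob_space "M n" by (rule prob)
    have "integral\<^sup>L (M n) (\<lambda>\<omega>. g j (Y n \<omega>)) \<le> integral\<^sup>L (M n) (indicator {\<omega> \<in> space (M n). Y n \<omega> \<in> B n})"
    proof (rule integral_mono)
      show "integrable (M n) (indicator {\<omega> \<in> space (M n). Y n \<omega> \<in> B n} :: 'a \<Rightarrow> real)" using Bm[of n] by (intro integrable_real_indicator) (auto simp: Pn.emeasure_eq_measure)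
      show "integrable (M n) (\<lambda>\<omega>. g j (Y n \<omega>))"
        by (rule Pn.integrable_const_bound[of _ 1]) (use g_range gn_meas in auto)
      fix \<omega> assume "\<omega> \<in> space (M n)"
      show "g j (Y n \<omega>) \<le> indicator {\<omega> \<in> space (M n). Y n \<omega> \<in> B n} \<omega>"
      proof (cases "g j (Y n \<omega>) > 0")
        case True thus ?thesis using g_pos[OF True elim(2)] g_range \<open>\<omega> \<in> space (M n)\<close> by simp
      qed (use g_range in \<open>auto simp: indicator_def\<close>)
    qed
    also have "\<dots> = measure (M n) {\<omega> \<in> space (M n). Y n \<omega> \<in> B n}" by (simp add: Int_absorb2)
    finally have "integral\<^sup>L (M n) (\<lambda>\<omega>. g j (Y n \<omega>)) \<le> measure (M n) {\<omega> \<in> space (M n). Y n \<omega> \<in> B n}" .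
    thus ?case using elim(1) int0 j mA unfolding dist_real_def by linarith
  qed
qed


lemma null_coord_countable:
  fixes i k :: nat
  assumes i: "i \<in> {1..k}" and E: "countable E"
  shows "{x \<in> space (PiM {1..k} (\<lambda>_. lborel)). x i \<in> E} \<in> null_sets (PiM {1..k} (\<lambda>_. lborel :: real measure))"
proof -
  interpret L: product_sigma_finite "\<lambda>_::nat. lborel :: real measure" by standard
  define Ai where "Ai l = (if l = i then E else UNIV)" for l
  have Enull: "E \<in> null_sets lborel" by (rule countable_imp_null_set_lborel[OF E])
  have As: "Ai l \<in> sets lborel" for l unfolding Ai_def using Enull by auto
  have eq: "{x \<in> space (PiM {1..k} (\<lambda>_. lborel)). x i \<in> E} = PiE {1..k} Ai"
    unfolding Ai_def using i by (auto simp: space_PiM PiE_iff extensional_def split: if_splits)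
  have "emeasure (PiM {1..k} (\<lambda>_. lborel)) (PiE {1..k} Ai) = (\<Prod>l\<in>{1..k}. emeasure lborel (Ai l))"
    by (rule L.emeasure_PiM) (use As in auto)
  also have "\<dots> = 0" using i Enull by (intro prod_zero) (auto simp: Ai_def intro!: bexI[of _ i])
  finally show ?thesis unfolding eq using As by (auto intro!: sets_PiM_I_finite)
qed

lemma null_diag:
  fixes i j k :: nat
  assumes ij: "i \<in> {1..k}" "j \<in> {1..k}" "i \<noteq> j"
  shows "{x \<in> space (PiM {1..k} (\<lambda>_. lborel)). x i = x j} \<in> null_sets (PiM {1..k} (\<lambda>_. lborel :: real measure))"
proof -
  interpret L: product_sigma_finite "\<lambda>_::nat. lborel :: real measure" by standard
  define I where "I = {1..k} - {i}"
  have II: "insert i I = {1..k}" "finite I" "i \<notin> I" "j \<in> I" using ij unfolding I_def by auto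
  define N where "N = {x \<in> space (PiM {1..k} (\<lambda>_. lborel)). x i = (x j :: real)}"
  have Ns: "N \<in> sets (PiM {1..k} (\<lambda>_. lborel))" unfolding N_def using ij by measurable
  have "emeasure (PiM {1..k} (\<lambda>_. lborel)) N = (\<integral>\<^sup>+ x. indicator N x \<partial>(PiM (insert i I) (\<lambda>_. lborel)))"
    using Ns II(1) by (simp add: nn_integral_indicator)
  also have "\<dots> = (\<integral>\<^sup>+ x. (\<integral>\<^sup>+ y. indicator N (x(i := y)) \<partial>lborel) \<partial>(PiM I (\<lambda>_. lborel)))"
    by (rule L.product_nn_integral_insert[OF II(2,3)]) (use Ns II(1) in simp)
  also have "\<dots> = (\<integral>\<^sup>+ x. 0 \<partial>(PiM I (\<lambda>_. lborel :: real measure)))"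
  proof (rule nn_integral_cong)
    fix x assume x: "x \<in> space (PiM I (\<lambda>_. lborel :: real measure))"
    have "(\<lambda>y. indicator N (x(i := y)) :: ennreal) = indicator {x j}"
    proof
      fix y :: real
      have "x(i := y) \<in> space (PiM {1..k} (\<lambda>_. lborel))"
        using x II unfolding space_PiM by (auto simp: PiE_iff extensional_def)
      moreover have "(x(i := y)) j = x j" "(x(i:=y)) i = y" using ij by auto
      ultimately show "indicator N (x(i := y)) = (indicator {x j} y :: ennreal)" by (auto simp: N_def indicator_def)
    qed
    thus "(\<integral>\<^sup>+ y. indicator N (x(i := y)) \<partial>lborel) = 0" by simp
  qed
  also have "\<dots> = 0" by simp
  finally show ?thesis using Ns unfolding N_def by auto
qed


lemma AE_gen:
  fixes M0 :: "'b measure" and X0 :: "'b \<Rightarrow> nat \<Rightarrow> real" and k :: nat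
  assumes prob0: "prob_space M0"
    and meas0: "\<And>i. i \<ge> 1 \<Longrightarrow> (\<lambda>\<omega>. X0 \<omega> i) \<in> borel_measurable M0"
    and range0: "\<And>i \<omega>. i \<ge> 1 \<Longrightarrow> \<omega> \<in> space M0 \<Longrightarrow> X0 \<omega> i \<in> {0..1}"
    and dens0: "\<exists>f. f \<in> borel_measurable (PiM {1..k} (\<lambda>_. lborel)) \<and>
         distr M0 (PiM {1..k} (\<lambda>_. lborel)) (\<lambda>\<omega>. restrict (X0 \<omega>) {1..k})
           = density (PiM {1..k} (\<lambda>_. lborel)) f"
  shows "AE \<omega> in M0. vec_emb k (X0 \<omega>) \<in> Gen U k"
proof -
  let ?PM = "PiM {1..k} (\<lambda>_. lborel :: real measure)"
  let ?R = "\<lambda>\<omega>. restrict (X0 \<omega>) {1..k}"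
  obtain f where f: "f \<in> borel_measurable ?PM" and df: "distr M0 ?PM ?R = density ?PM f"
    using dens0 by blast
  have Rm: "?R \<in> measurable M0 ?PM"
    by (rule measurable_restrict) (use meas0 in auto)
  have nullAE: "AE \<omega> in M0. ?R \<omega> \<notin> N" if N: "N \<in> null_sets ?PM" for N
  proof -
    have "AE x in ?PM. x \<notin> N" by (rule AE_not_in[OF N])
    hence "AE x in density ?PM f. x \<notin> N" using AE_density[OF f] by (auto elim: eventually_mono)
    hence dd: "AE x in distr M0 ?PM ?R. x \<notin> N" unfolding df .
    have Ns: "{x \<in> space ?PM. x \<notin> N} \<in> sets ?PM" using N by auto
    have iff: "(AE x in distr M0 ?PM ?R. x \<notin> N) \<longleftrightarrow> (AE \<omega> in M0. ?R \<omega> \<notin> N)"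
      by (rule AE_distr_iff[OF Rm Ns])
    show ?thesis using iff dd by (rule iffD1)
  qed
  have a1: "AE \<omega> in M0. \<forall>i\<in>{1..k}. X0 \<omega> i \<notin> Eset (fst U) \<and> X0 \<omega> i \<notin> Eset (snd U)"
  proof (rule AE_finite_allI[OF finite_atLeastAtMost])
    fix i assume i: "i \<in> {1..k}"
    have "AE \<omega> in M0. ?R \<omega> \<notin> {x \<in> space ?PM. x i \<in> Eset (fst U)}"
      by (rule nullAE[OF null_coord_countable[OF i countable_Eset]])
    moreover have "AE \<omega> in M0. ?R \<omega> \<notin> {x \<in> space ?PM. x i \<in> Eset (snd U)}"
      by (rule nullAE[OF null_coord_countable[OF i countable_Eset]])
    moreover have "AE \<omega> in M0. ?R \<omega> \<in> space ?PM" by (rule AE_I2) (rule measurable_space[OF Rm])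
    ultimately show "AE \<omega> in M0. X0 \<omega> i \<notin> Eset (fst U) \<and> X0 \<omega> i \<notin> Eset (snd U)"
    proof eventually_elim
      case (elim \<omega>)
      have r: "?R \<omega> i = X0 \<omega> i" using i by simp
      have n1: "\<not> (?R \<omega> \<in> space ?PM \<and> ?R \<omega> i \<in> Eset (fst U))" using elim(1) by (simp only: mem_Collect_eq not_False_eq_True)
      have n2: "\<not> (?R \<omega> \<in> space ?PM \<and> ?R \<omega> i \<in> Eset (snd U))" using elim(2) by (simp only: mem_Collect_eq not_False_eq_True)
      show ?case using n1 n2 elim(3) unfolding r by blast
    qed
  qed
  have a2: "AE \<omega> in M0. \<forall>p\<in>{1..k}\<times>{1..k}. fst p \<noteq> snd p \<longrightarrow> X0 \<omega> (fst p) \<noteq> X0 \<omega> (snd p)"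
  proof (rule AE_finite_allI)
    show "finite ({1..k}\<times>{1..k::nat})" by simp
    fix p assume p: "p \<in> {1..k}\<times>{1..k::nat}"
    show "AE \<omega> in M0. fst p \<noteq> snd p \<longrightarrow> X0 \<omega> (fst p) \<noteq> X0 \<omega> (snd p)"
    proof (cases "fst p = snd p")
      case True thus ?thesis by simp
    next
      case False
      have "AE \<omega> in M0. ?R \<omega> \<notin> {x \<in> space ?PM. x (fst p) = x (snd p)}"
        by (rule nullAE[OF null_diag]) (use p False in auto)
      moreover have "AE \<omega> in M0. ?R \<omega> \<in> space ?PM" by (rule AE_I2) (rule measurable_space[OF Rm])
      ultimately show ?thesis
      proof eventually_elim
        case (elim \<omega>)
        have r: "?R \<omega> (fst p) = X0 \<omega> (fst p)" "?R \<omega> (snd p) = X0 \<omega> (snd p)" using p by auto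
        have n: "\<not> (?R \<omega> \<in> space ?PM \<and> ?R \<omega> (fst p) = ?R \<omega> (snd p))"
          using elim(1) by (simp only: mem_Collect_eq not_False_eq_True)
        show ?case using n elim(2) unfolding r by blast
      qed
    qed
  qed
  show ?thesis using a1 a2 AE_space
  proof eventually_elim
    case (elim \<omega>)
    have \<omega>: "\<omega> \<in> space M0"
      and h1: "\<forall>i\<in>{1..k}. X0 \<omega> i \<notin> Eset (fst U) \<and> X0 \<omega> i \<notin> Eset (snd U)"
      and h2: "\<forall>p\<in>{1..k}\<times>{1..k}. fst p \<noteq> snd p \<longrightarrow> X0 \<omega> (fst p) \<noteq> X0 \<omega> (snd p)"
      using elim by auto
    have h3: "\<forall>i\<in>{1..k}. X0 \<omega> i \<in> {0..1}" using range0[OF _ \<omega>] by simp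
    have h2': "\<forall>i\<in>{1..k}. \<forall>j\<in>{1..k}. i \<noteq> j \<longrightarrow> X0 \<omega> i \<noteq> X0 \<omega> j"
      using h2 by fastforce
    have ve: "\<forall>i\<in>{1..k}. vec_emb k (X0 \<omega>) i = X0 \<omega> i" unfolding vec_emb_def by simp
    show "vec_emb k (X0 \<omega>) \<in> Gen U k"
      unfolding Gen_def using h1 h2' h3 ve by simp
  qed
qed

theorem proposition14:
  fixes Us :: "nat \<Rightarrow> real set \<times> real set" and U :: "real set \<times> real set"
    and M :: "nat \<Rightarrow> 'a measure" and X :: "nat \<Rightarrow> 'a \<Rightarrow> nat \<Rightarrow> real"
    and M0 :: "'b measure" and X0 :: "'b \<Rightarrow> nat \<Rightarrow> real"
  assumes U_in: "\<And>n. Us n \<in> U2" and U0_in: "U \<in> U2"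
    and U_conv: "(\<lambda>n. dU2 (Us n) U) \<longlonglongrightarrow> 0"
    and prob: "\<And>n. prob_space (M n)" and prob0: "prob_space M0"
    and meas: "\<And>n i. i \<ge> 1 \<Longrightarrow> (\<lambda>\<omega>. X n \<omega> i) \<in> borel_measurable (M n)"
    and meas0: "\<And>i. i \<ge> 1 \<Longrightarrow> (\<lambda>\<omega>. X0 \<omega> i) \<in> borel_measurable M0"
    and range: "\<And>n i \<omega>. i \<ge> 1 \<Longrightarrow> \<omega> \<in> space (M n) \<Longrightarrow> X n \<omega> i \<in> {0..1}"
    and range0: "\<And>i \<omega>. i \<ge> 1 \<Longrightarrow> \<omega> \<in> space M0 \<Longrightarrow> X0 \<omega> i \<in> {0..1}"
    and dens: "\<And>n k. k \<ge> 1 \<Longrightarrow> \<exists>f. f \<in> borel_measurable (PiM {1..k} (\<lambda>_. lborel)) \<and>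
         distr (M n) (PiM {1..k} (\<lambda>_. lborel)) (\<lambda>\<omega>. restrict (X n \<omega>) {1..k})
           = density (PiM {1..k} (\<lambda>_. lborel)) f"
    and dens0: "\<And>k. k \<ge> 1 \<Longrightarrow> \<exists>f. f \<in> borel_measurable (PiM {1..k} (\<lambda>_. lborel)) \<and>
         distr M0 (PiM {1..k} (\<lambda>_. lborel)) (\<lambda>\<omega>. restrict (X0 \<omega>) {1..k})
           = density (PiM {1..k} (\<lambda>_. lborel)) f"
    and law_conv: "\<And>k (g :: (nat \<Rightarrow> real) \<Rightarrow> real). k \<ge> 1 \<Longrightarrow> continuous_on UNIV g \<Longrightarrow> bounded (range g) \<Longrightarrow>
         (\<lambda>n. integral\<^sup>L (M n) (\<lambda>\<omega>. g (vec_emb k (X n \<omega>))))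
           \<longlonglongrightarrow> integral\<^sup>L M0 (\<lambda>\<omega>. g (vec_emb k (X0 \<omega>)))"
  shows "\<forall>k\<ge>1. \<forall>w :: nat list.
           (\<lambda>n. measure (M n) {\<omega> \<in> space (M n). paintbox (Us n) k (X n \<omega>) = w})
             \<longlonglongrightarrow> measure M0 {\<omega> \<in> space M0. paintbox U k (X0 \<omega>) = w}"
proof (intro allI impI)
  fix k :: nat and w :: "nat list" assume k: "k \<ge> 1"
  define Y where "Y n \<omega> = vec_emb k (X n \<omega>)" for n \<omega>
  define Y0 where "Y0 \<omega> = vec_emb k (X0 \<omega>)" for \<omega>
  have Ym: "Y n \<in> borel_measurable (M n)" for n
    unfolding Y_def vec_emb_def
    apply (rule measurable_coordinatewise_then_product)
    subgoal for i by (cases "i \<in> {1..k}") (use meas in auto)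
    done
  have Y0m: "Y0 \<in> borel_measurable M0"
    unfolding Y0_def vec_emb_def
    apply (rule measurable_coordinatewise_then_product)
    subgoal for i by (cases "i \<in> {1..k}") (use meas0 in auto)
    done
  have conv: "(\<lambda>n. integral\<^sup>L (M n) (\<lambda>\<omega>. g (Y n \<omega>))) \<longlonglongrightarrow> integral\<^sup>L M0 (\<lambda>\<omega>. g (Y0 \<omega>))"
    if "continuous_on UNIV g" "bounded (range g)" for g :: "(nat \<Rightarrow> real) \<Rightarrow> real"
    unfolding Y_def Y0_def by (rule law_conv[OF k that])
  have AEG: "AE \<omega> in M0. Y0 \<omega> \<in> Gen U k"
    unfolding Y0_def by (rule AE_gen[OF prob0 meas0 range0 dens0[OF k]])
  have mainS: "eventually (\<lambda>n. measure (M n) {\<omega> \<in> space (M n). paintbox (Us n) k (X n \<omega>) \<in> S}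
        > measure M0 {\<omega> \<in> space M0. paintbox U k (X0 \<omega>) \<in> S} - e) sequentially"
    if e: "e > 0" for S e
  proof -
    have Bm: "{\<omega> \<in> space (M n). Y n \<omega> \<in> {y. paintbox (Us n) k y \<in> S}} \<in> sets (M n)" for n
      unfolding Y_def using paintbox_event_meas[OF U_in[of n], of k "X n" "M n" S] meas
      by (simp add: paintbox_vec_emb)
    have rob: "\<exists>\<epsilon>>0. \<exists>N. \<forall>n\<ge>N. \<forall>y. dk k x y < \<epsilon> \<longrightarrow> y \<in> {y. paintbox (Us n) k y \<in> S}"
      if "x \<in> {y. paintbox U k y \<in> S}" "x \<in> Gen U k" for x
      using robust[OF U0_in U_in U_conv that(2)] that(1) by fastforce
    from key[where A="{y. paintbox U k y \<in> S}" and B="\<lambda>n. {y. paintbox (Us n) k y \<in> S}" and G="Gen U k",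
             OF prob prob0 Ym Y0m conv Bm AEG rob e]
    show ?thesis unfolding Y_def Y0_def by (simp add: paintbox_vec_emb)
  qed
  define p where "p n = measure (M n) {\<omega> \<in> space (M n). paintbox (Us n) k (X n \<omega>) = w}" for n
  define p0 where "p0 = measure M0 {\<omega> \<in> space M0. paintbox U k (X0 \<omega>) = w}"
  have compl: "measure (M n) {\<omega> \<in> space (M n). paintbox (Us n) k (X n \<omega>) \<in> - {w}} = 1 - p n" for n
  proof -
    interpret Pn: prob_space "M n" by (rule prob)
    have ev: "{\<omega> \<in> space (M n). paintbox (Us n) k (X n \<omega>) \<in> {w}} \<in> sets (M n)"
      using paintbox_event_meas[OF U_in[of n], of k "X n" "M n" "{w}"] meas by simp
    have "{\<omega> \<in> space (M n). paintbox (Us n) k (X n \<omega>) \<in> - {w}} = space (M n) - {\<omega> \<in> space (M n). paintbox (Us n) k (X n \<omega>) \<in> {w}}"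
      by auto
    thus ?thesis using Pn.prob_compl[OF ev] unfolding p_def by simp
  qed
  have compl0: "measure M0 {\<omega> \<in> space M0. paintbox U k (X0 \<omega>) \<in> - {w}} = 1 - p0"
  proof -
    interpret P0: prob_space M0 by (rule prob0)
    have ev: "{\<omega> \<in> space M0. paintbox U k (X0 \<omega>) \<in> {w}} \<in> sets M0"
      using paintbox_event_meas[OF U0_in, of k X0 M0 "{w}"] meas0 by simp
    have "{\<omega> \<in> space M0. paintbox U k (X0 \<omega>) \<in> - {w}} = space M0 - {\<omega> \<in> space M0. paintbox U k (X0 \<omega>) \<in> {w}}"
      by auto
    thus ?thesis using P0.prob_compl[OF ev] unfolding p0_def by simp
  qed
  have "p \<longlonglongrightarrow> p0"
  proof (rule tendstoI)
    fix e :: real assume e: "e > 0"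
    have A: "eventually (\<lambda>n. p n > p0 - e) sequentially"
      using mainS[OF e, of "{w}"] unfolding p_def p0_def by simp
    have B: "eventually (\<lambda>n. 1 - p n > 1 - p0 - e) sequentially"
      using mainS[OF e, of "- {w}"] unfolding compl compl0 .
    show "eventually (\<lambda>n. dist (p n) p0 < e) sequentially"
      using A B by eventually_elim (auto simp: dist_real_def abs_less_iff)
  qed
  thus "(\<lambda>n. measure (M n) {\<omega> \<in> space (M n). paintbox (Us n) k (X n \<omega>) = w})
             \<longlonglongrightarrow> measure M0 {\<omega> \<in> space M0. paintbox U k (X0 \<omega>) = w}"
    unfolding p_def p0_def .
qed

end
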